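(* Let $n\ge 1$ and let $\mathbf{k}=(k_1,\dots,k_n)$ be a vector of positive integers. Let $\mathcal{K}$ be the set of all vectors $\mathbf{k}'$ obtained by permuting the entries of $\mathbf{k}$, and put $\mathcal{D}_{\mathcal{K}}=\bigcup_{\mathbf{k}'\in\mathcal{K}}\mathcal{D}_{\mathbf{k}'}$, $\mathcal{D}_{\mathcal{K}^+}=\bigcup_{\mathbf{k}'\in\mathcal{K}}\mathcal{D}_{\mathbf{k}'^+}$, $\mathcal{D}_{\mathcal{K}^-}=\bigcup_{\mathbf{k}'\in\mathcal{K}}\mathcal{D}_{\mathbf{k}'^-}$, where $\mathbf{k}'^{\pm}=\mathbf{k}'\pm\frac1n(1,\dots,1)$. Then the sweep map $\Phi$ restricts to bijections $\mathcal{D}_{\mathcal{K}^+}\to\mathcal{D}_{\mathcal{K}^+}$, $\mathcal{D}_{\mathcal{K}^-}\to\mathcal{D}_{\mathcal{K}^-}$ and $\mathcal{D}_{\mathcal{K}}\to\mathcal{D}_{\mathcal{K}}$.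
   Context: For a vector $\mathbf{u}=(u_1,\dots,u_n)$ of positive rational numbers with $|\mathbf{u}|=u_1+\cdots+u_n$ a positive integer, $\mathcal{D}_{\mathbf{u}}$ denotes the set of sequences $D=(a_1,\dots,a_N)$, $N=n+|\mathbf{u}|$, whose positive entries are $u_1,\dots,u_n$ in this order from left to right, whose remaining $|\mathbf{u}|$ entries all equal $-1$, and whose partial sums $r_i=a_1+\cdots+a_{i-1}$ (so $r_1=0$) are all $\ge 0$; $r_i$ is the (starting) rank of the $i$-th step. (Geometrically: lattice paths from $(0,0)$ to $(N,0)$ with up steps $(1,u_i)$ and down steps $(1,-1)$ never going below the horizontal axis.) The sweep map $\Phi$ is defined on such sequences as follows: let $\pi$ be the permutation of $\{1,\dots,N\}$ listing the positions $i$ in order of increasing rank $r_i$, and, among positions of equal rank, in decreasing order of $i$ (right to left); then $\Phi(D)=(a_{\pi(1)},a_{\pi(2)},\dots,a_{\pi(N)})$. *)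

theory Defs
  imports Complex_Main "HOL-Library.Product_Lexorder" "HOL-Library.Multiset"
begin

text \<open>Sequences are lists of rationals, positions are 0-based.
  The rank of position i is the sum of the entries strictly before it.\<close>

definition rank :: "rat list \<Rightarrow> nat \<Rightarrow> rat" where
  "rank a i = sum_list (take i a)"

definition Dset :: "rat list \<Rightarrow> rat list set" where
  "Dset u = {a. \<exists>m::nat. sum_list u = of_nat m
                 \<and> length a = length u + m
                 \<and> filter (\<lambda>x. 0 < x) a = u
                 \<and> (\<forall>x\<in>set a. 0 < x \<or> x = -1)
                 \<and> (\<forall>i\<le>length a. 0 \<le> rank a i)}"

definition sweep_order :: "rat list \<Rightarrow> nat list" where
  "sweep_order a = sort_key (\<lambda>i. (rank a i, - int i)) [0..<length a]"

definition sweep :: "rat list \<Rightarrow> rat list" where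
  "sweep a = map (\<lambda>i. a ! i) (sweep_order a)"

definition shiftv :: "rat \<Rightarrow> nat list \<Rightarrow> rat list" where
  "shiftv c k = map (\<lambda>x. of_nat x + c) k"

definition DK :: "rat \<Rightarrow> nat list \<Rightarrow> rat list set" where
  "DK c k = (\<Union>k'\<in>{k'. mset k' = mset k}. Dset (shiftv c k'))"

end

theory Submission
  imports Defs
begin


section \<open>Generic facts on sorting positions by an injective key\<close>

lemma sk_basic:
  fixes f :: "nat \<Rightarrow> 'b::linorder" and N :: nat
  defines "p \<equiv> sort_key f [0..<N]"
  shows "distinct p" "set p = {..<N}" "length p = N" "sorted (map f p)"
  unfolding p_def by auto

lemma sk_strict:
  fixes f :: "nat \<Rightarrow> 'b::linorder"
  assumes inj: "inj_on f {..<N}" and st: "s < t" "t < N"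
  shows "f (sort_key f [0..<N] ! s) < f (sort_key f [0..<N] ! t)"
proof -
  let ?p = "sort_key f [0..<N]"
  have "f (?p ! s) \<le> f (?p ! t)"
    using sorted_nth_mono[OF sk_basic(4)[of f N], of s t] st by simp
  moreover have "?p ! s \<noteq> ?p ! t"
    using sk_basic(1)[of f N] st by (simp add: nth_eq_iff_index_eq)
  moreover have "?p ! s \<in> {..<N}" "?p ! t \<in> {..<N}"
    using sk_basic(2,3)[of f N] st by (metis nth_mem order.strict_trans)+
  ultimately show ?thesis using inj unfolding inj_on_def by (metis order_less_le)
qed

lemma sk_less_iff:
  fixes f :: "nat \<Rightarrow> 'b::linorder"
  assumes inj: "inj_on f {..<N}" and st: "s < N" "t < N"
  shows "f (sort_key f [0..<N] ! s) < f (sort_key f [0..<N] ! t) \<longleftrightarrow> s < t"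
  using sk_strict[OF inj, of s t] sk_strict[OF inj, of t s] st
  by (metis less_asym linorder_neqE_nat)

lemma sk_bij:
  fixes f :: "nat \<Rightarrow> 'b::linorder"
  shows "bij_betw (\<lambda>t. sort_key f [0..<N] ! t) {..<N} {..<N}"
proof -
  let ?p = "sort_key f [0..<N]"
  have "bij_betw (nth ?p) {..<length ?p} (set ?p)"
    using sk_basic(1)[of f N] by (simp add: bij_betw_def inj_on_nth set_conv_nth image_def) blast
  then show ?thesis using sk_basic(2,3)[of f N] by simp
qed

lemma card_sk:
  fixes f :: "nat \<Rightarrow> 'b::linorder"
  shows "card {t. t < N \<and> Q (sort_key f [0..<N] ! t)} = card {i. i < N \<and> Q i}"
proof -
  let ?p = "sort_key f [0..<N]"
  have b: "bij_betw (\<lambda>t. ?p ! t) {..<N} {..<N}" by (rule sk_bij)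
  have "bij_betw (\<lambda>t. ?p ! t) {t. t < N \<and> Q (?p ! t)} {i. i < N \<and> Q i}"
  proof -
    have "{t. t < N \<and> Q (?p ! t)} = {..<N} \<inter> {t. Q (?p ! t)}" by auto
    moreover have "(\<lambda>t. ?p ! t) ` ({..<N} \<inter> {t. Q (?p ! t)}) = {i. i < N \<and> Q i}"
      using b unfolding bij_betw_def by auto
    moreover have "inj_on (\<lambda>t. ?p ! t) ({..<N} \<inter> {t. Q (?p ! t)})"
      using b unfolding bij_betw_def by (auto intro: inj_on_subset)
    ultimately show ?thesis unfolding bij_betw_def by simp
  qed
  then show ?thesis by (rule bij_betw_same_card)
qed

lemma sk_index:
  fixes f :: "nat \<Rightarrow> 'b::linorder"
  assumes inj: "inj_on f {..<N}" and i: "i < N"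
  shows "\<exists>t<N. sort_key f [0..<N] ! t = i \<and> t = card {j. j < N \<and> f j < f i}"
proof -
  let ?p = "sort_key f [0..<N]"
  obtain t where t: "t < N" "?p ! t = i"
    using sk_basic(2,3)[of f N] i by (metis in_set_conv_nth lessThan_iff)
  have "card {j. j < N \<and> f j < f i} = card {s. s < N \<and> f (?p ! s) < f i}"
    using card_sk[of N "\<lambda>j. f j < f i" f] by simp
  also have "{s. s < N \<and> f (?p ! s) < f i} = {..<t}"
    using sk_less_iff[OF inj _ t(1)] t by auto
  finally show ?thesis using t by auto
qed



definition Rk :: "int list \<Rightarrow> nat \<Rightarrow> int" where
  "Rk x i = sum_list (take i x)"

definition ky :: "bool \<Rightarrow> int list \<Rightarrow> nat \<Rightarrow> int \<times> int" where
  "ky b x i = (Rk x i, if b then int i else - int i)"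

abbreviation ordl :: "bool \<Rightarrow> int list \<Rightarrow> nat list" where
  "ordl b x \<equiv> sort_key (ky b x) [0..<length x]"

definition Wd :: "bool \<Rightarrow> int list \<Rightarrow> int list" where
  "Wd b x = map (nth x) (ordl b x)"

definition Lv :: "bool \<Rightarrow> int list \<Rightarrow> int list" where
  "Lv b x = map (Rk x) (ordl b x)"

lemma ky_inj: "inj_on (ky b x) A"
  by (auto simp: inj_on_def ky_def split: if_splits)

lemma Rk_Suc: "i < length x \<Longrightarrow> Rk x (Suc i) = Rk x i + x ! i"
  by (simp add: Rk_def take_Suc_conv_app_nth)

lemma Rk_0[simp]: "Rk x 0 = 0" by (simp add: Rk_def)

lemma Rk_take: "j \<le> p \<Longrightarrow> take p x = take p y \<Longrightarrow> Rk x j = Rk y j"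
  unfolding Rk_def by (metis min.absorb1 take_take)

lemma len_Wd[simp]: "length (Wd b x) = length x" by (simp add: Wd_def)
lemma len_Lv[simp]: "length (Lv b x) = length x" by (simp add: Lv_def)
lemma Wd_nth: "t < length x \<Longrightarrow> Wd b x ! t = x ! (ordl b x ! t)" by (simp add: Wd_def)
lemma Lv_nth: "t < length x \<Longrightarrow> Lv b x ! t = Rk x (ordl b x ! t)" by (simp add: Lv_def)

lemma cross:
  assumes steps: "\<forall>v\<in>set x. v = -1 \<or> v \<ge> 1"
  shows "i < j \<Longrightarrow> j \<le> length x \<Longrightarrow> Rk x i \<ge> g \<Longrightarrow> Rk x j < g \<Longrightarrow>
     \<exists>q. i \<le> q \<and> q < j \<and> Rk x q = g \<and> x ! q = -1"
proof (induction j)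
  case 0 then show ?case by simp
next
  case (Suc j)
  have xj: "x ! j = -1 \<or> x ! j \<ge> 1" using steps Suc.prems(2) by auto
  have rs: "Rk x (Suc j) = Rk x j + x ! j" using Suc.prems(2) by (simp add: Rk_Suc)
  show ?case
  proof (cases "Rk x j \<ge> g")
    case True
    then have "x ! j = -1" "Rk x j = g" using xj rs Suc.prems(4) by auto
    then show ?thesis using Suc.prems by (intro exI[of _ j]) auto
  next
    case False
    then have "i < j" using Suc.prems(1,3) by (metis less_SucE)
    from Suc.IH[OF this] False Suc.prems obtain q where "i \<le> q \<and> q < j \<and> Rk x q = g \<and> x ! q = -1"
      by auto
    then show ?thesis by (intro exI[of _ q]) auto
  qed
qed

lemma card_ky_less:
  assumes p: "p < length x"
  shows "card {j. j < length x \<and> ky b x j < ky b x p} =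
     card {j. j < length x \<and> Rk x j < Rk x p} +
     (if b then card {j. j < p \<and> Rk x j = Rk x p}
      else card {j. j < length x \<and> Rk x j = Rk x p} - card {j. j \<le> p \<and> Rk x j = Rk x p})"
proof -
  let ?N = "length x" and ?h = "Rk x p"
  have split: "{j. j < ?N \<and> ky b x j < ky b x p} =
     {j. j < ?N \<and> Rk x j < ?h} \<union> {j. j < ?N \<and> Rk x j = ?h \<and> (if b then j < p else p < j)}"
    by (auto simp: ky_def split: if_splits)
  have c1: "card ({j. j < ?N \<and> Rk x j < ?h} \<union> {j. j < ?N \<and> Rk x j = ?h \<and> (if b then j < p else p < j)})
     = card {j. j < ?N \<and> Rk x j < ?h} + card {j. j < ?N \<and> Rk x j = ?h \<and> (if b then j < p else p < j)}"
    by (rule card_Un_disjoint) auto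
  show ?thesis
  proof (cases b)
    case True
    have "{j. j < ?N \<and> Rk x j = ?h \<and> (if b then j < p else p < j)} = {j. j < p \<and> Rk x j = ?h}"
      using True p by auto
    then show ?thesis using split c1 True by simp
  next
    case False
    have "{j. j < ?N \<and> Rk x j = ?h \<and> (if b then j < p else p < j)} =
       {j. j < ?N \<and> Rk x j = ?h} - {j. j \<le> p \<and> Rk x j = ?h}"
      using False p by auto
    moreover have "card ({j. j < ?N \<and> Rk x j = ?h} - {j. j \<le> p \<and> Rk x j = ?h}) =
       card {j. j < ?N \<and> Rk x j = ?h} - card {j. j \<le> p \<and> Rk x j = ?h}"
      by (rule card_Diff_subset) (use p in auto)
    ultimately show ?thesis using split c1 False by simp
  qed
qed

lemma card_Lv:
  "card {t. t < length x \<and> Q (Lv b x ! t) (Wd b x ! t)} = card {j. j < length x \<and> Q (Rk x j) (x ! j)}"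
proof -
  have "{t. t < length x \<and> Q (Lv b x ! t) (Wd b x ! t)} =
        {t. t < length x \<and> (\<lambda>j. Q (Rk x j) (x ! j)) (ordl b x ! t)}"
    by (auto simp: Lv_nth Wd_nth)
  then show ?thesis using card_sk[of "length x" "\<lambda>j. Q (Rk x j) (x ! j)" "ky b x"] by simp
qed

lemma recon:
  assumes len: "length x = length y" and W: "Wd b x = Wd b y" and L: "Lv b x = Lv b y"
  shows "x = y"
proof -
  let ?N = "length x"
  have "p \<le> ?N \<Longrightarrow> take p x = take p y" for p
  proof (induction p)
    case 0 then show ?case by simp
  next
    case (Suc p)
    then have p: "p < ?N" and tk: "take p x = take p y" by auto
    have hp: "Rk x p = Rk y p" using Rk_take[OF le_refl tk] .
    let ?h = "Rk x p"
    have A: "card {j. j < ?N \<and> Rk x j < ?h} = card {j. j < ?N \<and> Rk y j < ?h}"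
      using card_Lv[where Q="\<lambda>r w. r < ?h" and x=x and b=b] card_Lv[where Q="\<lambda>r w. r < ?h" and x=y and b=b] L len by simp
    have B: "card {j. j < ?N \<and> Rk x j = ?h} = card {j. j < ?N \<and> Rk y j = ?h}"
      using card_Lv[where Q="\<lambda>r w. r = ?h" and x=x and b=b] card_Lv[where Q="\<lambda>r w. r = ?h" and x=y and b=b] L len by simp
    have C: "{j. j < p \<and> Rk x j = ?h} = {j. j < p \<and> Rk y j = ?h}"
      using Rk_take[OF _ tk] by auto
    have D: "{j. j \<le> p \<and> Rk x j = ?h} = {j. j \<le> p \<and> Rk y j = ?h}"
      using Rk_take[OF _ tk] by auto
    obtain t where t: "t < ?N" "ordl b x ! t = p" "t = card {j. j < ?N \<and> ky b x j < ky b x p}"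
      using sk_index[OF ky_inj[of b x "{..<?N}"] p] by (elim exE conjE) auto
    have py: "p < length y" using p len by simp
    obtain t' where t': "t' < length y" "ordl b y ! t' = p" "t' = card {j. j < length y \<and> ky b y j < ky b y p}"
      using sk_index[OF ky_inj[of b y "{..<length y}"] py] by (elim exE conjE) auto
    have "t = t'"
      using t(3) t'(3) card_ky_less[OF p, of b] card_ky_less[OF py, of b] p len A B C D hp by simp
    then have "x ! p = y ! p"
      using W Wd_nth[OF t(1), of b] Wd_nth[of t' y b] t t' len by simp
    then show ?case using tk p len by (simp add: take_Suc_conv_app_nth)
  qed
  from this[of ?N] len show ?thesis by simp
qed



definition pathok :: "int list \<Rightarrow> bool" where
  "pathok x \<longleftrightarrow> (\<forall>v\<in>set x. v = -1 \<or> v \<ge> 1) \<and> (\<forall>i<length x. Rk x i \<ge> 0)"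

lemma ordl_props:
  "distinct (ordl b x)" "set (ordl b x) = {..<length x}" "length (ordl b x) = length x"
  using sk_basic[of "ky b x" "length x"] by auto

lemma ordl_less_iff:
  "s < length x \<Longrightarrow> t < length x \<Longrightarrow>
   ky b x (ordl b x ! s) < ky b x (ordl b x ! t) \<longleftrightarrow> s < t"
  by (rule sk_less_iff[OF ky_inj])

lemma ordl_nth_lt: "t < length x \<Longrightarrow> ordl b x ! t < length x"
  using ordl_props(2,3)[of b x] by (metis lessThan_iff nth_mem)

lemma ordl_index: "i < length x \<Longrightarrow> \<exists>t<length x. ordl b x ! t = i"
  using ordl_props(2,3)[of b x] by (metis in_set_conv_nth lessThan_iff)

lemma Lv_mono:
  assumes "s \<le> t" "t < length x"
  shows "Lv b x ! s \<le> Lv b x ! t"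
proof (cases "s = t")
  case False
  then have "s < t" using assms by simp
  then have "ky b x (ordl b x ! s) < ky b x (ordl b x ! t)"
    using ordl_less_iff[of s x t b] assms by simp
  then show ?thesis using assms by (auto simp: Lv_nth ky_def)
qed simp

lemma Lv_nonneg: "pathok x \<Longrightarrow> t < length x \<Longrightarrow> Lv b x ! t \<ge> 0"
  by (simp add: pathok_def Lv_nth ordl_nth_lt)

lemma Lv_0: assumes "pathok x" "0 < length x" shows "Lv b x ! 0 = 0"
proof -
  obtain t where t: "t < length x" "ordl b x ! t = 0" using ordl_index[OF assms(2)] by blast
  have "Lv b x ! 0 \<le> Lv b x ! t" using Lv_mono[of 0 t x b] t by simp
  also have "\<dots> = 0" using t by (simp add: Lv_nth)
  finally show ?thesis using Lv_nonneg[OF assms(1) assms(2), of b] by simp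
qed

lemma Lv_contig:
  assumes ok: "pathok x" and e: "Rk x (length x) \<le> 0" and t: "Suc t < length x"
  shows "Lv b x ! Suc t \<le> Lv b x ! t + 1"
proof (rule ccontr)
  assume c: "\<not> ?thesis"
  let ?g = "Lv b x ! t + 1"
  let ?p = "ordl b x ! Suc t"
  have p: "?p < length x" using ordl_nth_lt[OF t] .
  have g1: "?g \<ge> 1" using Lv_nonneg[OF ok, of t b] t by simp
  have "Rk x ?p \<ge> ?g" using c t by (simp add: Lv_nth)
  moreover have "Rk x (length x) < ?g" using e g1 by simp
  ultimately obtain q where q: "?p \<le> q" "q < length x" "Rk x q = ?g"
    using cross[of x ?p "length x" ?g] ok p unfolding pathok_def by auto
  obtain sq where sq: "sq < length x" "ordl b x ! sq = q" using ordl_index[OF q(2)] by blast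
  have lq: "Lv b x ! sq = ?g" using sq q by (simp add: Lv_nth)
  show False
  proof (cases "sq \<le> t")
    case True then show False using Lv_mono[OF True, of x b] t lq by simp
  next
    case False then have st: "Suc t \<le> sq" by simp
    show False using Lv_mono[OF st sq(1), of b] lq c by simp
  qed
qed

lemma Dformula_pos:
  assumes ok: "pathok x"
  shows "card {p. p < length x \<and> x ! p = -1 \<and> Rk x p = g + 1}
       + card {p. p < length x \<and> x ! p \<ge> 1 \<and> Rk x p + x ! p = g}
       + (if g = 0 then 1 else 0)
       = card {p. p < length x \<and> Rk x p = g} + (if Rk x (length x) = g then 1 else 0)"
proof -
  let ?N = "length x"
  have steps: "\<forall>p<?N. x ! p = -1 \<or> x ! p \<ge> 1" using ok unfolding pathok_def by auto
  have U: "{p. p < ?N \<and> Rk x (Suc p) = g} =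
        {p. p < ?N \<and> x ! p = -1 \<and> Rk x p = g + 1} \<union> {p. p < ?N \<and> x ! p \<ge> 1 \<and> Rk x p + x ! p = g}"
    using steps by (auto simp: Rk_Suc)
  have c1: "card {p. p < ?N \<and> Rk x (Suc p) = g} =
        card {p. p < ?N \<and> x ! p = -1 \<and> Rk x p = g + 1} + card {p. p < ?N \<and> x ! p \<ge> 1 \<and> Rk x p + x ! p = g}"
    unfolding U by (rule card_Un_disjoint) auto
  have "card {p. p < ?N \<and> Rk x (Suc p) = g} = card (Suc ` {p. p < ?N \<and> Rk x (Suc p) = g})"
    by (simp add: card_image)
  also have "Suc ` {p. p < ?N \<and> Rk x (Suc p) = g} = {q. 0 < q \<and> q \<le> ?N \<and> Rk x q = g}"
    by (auto simp: image_def) (metis Suc_le_eq Suc_pred)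
  finally have c2: "card {p. p < ?N \<and> Rk x (Suc p) = g} = card {q. 0 < q \<and> q \<le> ?N \<and> Rk x q = g}" .
  have "{q. q \<le> ?N \<and> Rk x q = g} = {q. 0 < q \<and> q \<le> ?N \<and> Rk x q = g} \<union> (if g = 0 then {0} else {})"
    by (auto simp: gr0_conv_Suc) (metis Rk_0 not0_implies_Suc)
  then have c3: "card {q. q \<le> ?N \<and> Rk x q = g} = card {q. 0 < q \<and> q \<le> ?N \<and> Rk x q = g} + (if g = 0 then 1 else 0)"
    by (simp add: card_Un_disjoint)
  have "{q. q \<le> ?N \<and> Rk x q = g} = {p. p < ?N \<and> Rk x p = g} \<union> (if Rk x ?N = g then {?N} else {})"
    by (auto simp: le_less)
  then have c4: "card {q. q \<le> ?N \<and> Rk x q = g} = card {p. p < ?N \<and> Rk x p = g} + (if Rk x ?N = g then 1 else 0)"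
    by (simp add: card_Un_disjoint)
  show ?thesis using c1 c2 c3 c4 by simp
qed

lemma Dformula:
  assumes ok: "pathok x"
  shows "card {t. t < length x \<and> Wd b x ! t = -1 \<and> Lv b x ! t = g + 1}
       + card {t. t < length x \<and> Wd b x ! t \<ge> 1 \<and> Lv b x ! t + Wd b x ! t = g}
       + (if g = 0 then 1 else 0)
       = card {t. t < length x \<and> Lv b x ! t = g} + (if Rk x (length x) = g then 1 else 0)"
  using Dformula_pos[OF ok, of g]
    card_Lv[where Q="\<lambda>r w. w = -1 \<and> r = g + 1" and x=x and b=b]
    card_Lv[where Q="\<lambda>r w. w \<ge> 1 \<and> r + w = g" and x=x and b=b]
    card_Lv[where Q="\<lambda>r w. r = g" and x=x and b=b]
  by simp

lemma boundary:
  assumes ok: "pathok x" and s: "s < length x" and e: "Rk x (length x) < Lv b x ! s"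
    and ext: "\<forall>s'<length x. Lv b x ! s' = Lv b x ! s \<longrightarrow> (if b then s' \<le> s else s \<le> s')"
  shows "Wd b x ! s = -1"
proof (rule ccontr)
  assume c: "Wd b x ! s \<noteq> -1"
  let ?p = "ordl b x ! s" and ?g = "Lv b x ! s"
  have p: "?p < length x" using ordl_nth_lt[OF s] .
  have xp: "x ! ?p \<ge> 1" using c ok p s unfolding pathok_def by (auto simp: Wd_nth)
  have gp: "Rk x ?p = ?g" using s by (simp add: Lv_nth)
  have r1: "Rk x (Suc ?p) \<ge> ?g + 1" using xp gp p by (simp add: Rk_Suc)
  have p1: "Suc ?p < length x"
  proof (rule ccontr)
    assume "\<not> ?thesis" then have "Suc ?p = length x" using p by simp
    then show False using r1 e by simp
  qed
  obtain q where q: "Suc ?p \<le> q" "q < length x" "Rk x q = ?g"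
    using cross[of x "Suc ?p" "length x" ?g] ok p1 r1 e unfolding pathok_def by auto
  obtain sq where sq: "sq < length x" "ordl b x ! sq = q" using ordl_index[OF q(2)] by blast
  have lq: "Lv b x ! sq = ?g" using sq q by (simp add: Lv_nth)
  have ne: "sq \<noteq> s" using sq q by auto
  show False
  proof (cases b)
    case True
    then have "sq < s" using ext sq lq ne by auto
    then have "ky b x q < ky b x ?p" using ordl_less_iff[OF sq(1) s, of b] sq by simp
    then show False using True q gp by (simp add: ky_def)
  next
    case False
    then have "s < sq" using ext sq lq ne by auto
    then have "ky b x ?p < ky b x q" using ordl_less_iff[OF s sq(1), of b] sq by simp
    then show False using False q gp by (simp add: ky_def)
  qed
qed



lemma parse_core:
  assumes okx: "pathok x" and oky: "pathok y" and len: "length y = length x"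
    and ex: "Rk x (length x) = e" and ey: "Rk y (length y) = e" and e0: "e \<le> 0" and eb: "b \<longrightarrow> e < 0"
    and W: "Wd b x = Wd b y"
    and s: "s < length x" "0 < s"
    and agree: "\<forall>t<s. Lv b x ! t = Lv b y ! t"
    and hx: "Lv b x ! (s - 1) = h" and sx: "Lv b x ! s = h + 1" and sy: "Lv b y ! s = h"
  shows False
proof -
  let ?N = "length x"
  let ?W = "Wd b x"
  have hy: "Lv b y ! (s - 1) = h" using agree hx s by simp
  have h0: "h \<ge> 0" using Lv_nonneg[OF okx, of "s - 1" b] s hx by simp
  have lowx: "t < s" if "t < ?N" "Lv b x ! t < h" for t
  proof (rule ccontr)
    assume "\<not> t < s" then have "s - 1 \<le> t" by simp
    then show False using Lv_mono[OF _ that(1), of "s - 1" b] hx that by simp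
  qed
  have lowy: "t < s" if "t < ?N" "Lv b y ! t < h" for t
  proof (rule ccontr)
    assume "\<not> t < s" then have "s - 1 \<le> t" by simp
    then show False using Lv_mono[of "s - 1" t y b] hy that len by simp
  qed
  have highx: "Lv b x ! t \<ge> h + 1" if "s \<le> t" "t < ?N" for t
    using Lv_mono[OF that, of b] sx by simp
  have E1: "{t. t < ?N \<and> Lv b x ! t = h - 1} = {t. t < ?N \<and> Lv b y ! t = h - 1}"
  proof (intro Collect_cong iffI conjI)
    fix t assume "t < ?N \<and> Lv b x ! t = h - 1"
    then show "Lv b y ! t = h - 1" using lowx agree by force
  next
    fix t assume "t < ?N \<and> Lv b y ! t = h - 1"
    then show "Lv b x ! t = h - 1" using lowy agree by force
  qed auto
  have "Wd b x ! t \<ge> 1 \<Longrightarrow> Lv b x ! t + Wd b x ! t = h - 1 \<Longrightarrow> Lv b x ! t < h" for t by simp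
  have E2: "{t. t < ?N \<and> ?W ! t \<ge> 1 \<and> Lv b x ! t + ?W ! t = h - 1} =
            {t. t < ?N \<and> ?W ! t \<ge> 1 \<and> Lv b y ! t + ?W ! t = h - 1}"
  proof (intro Collect_cong iffI conjI)
    fix t assume a: "t < ?N \<and> ?W ! t \<ge> 1 \<and> Lv b x ! t + ?W ! t = h - 1"
    then have "t < s" using lowx[of t] by simp
    then show "Lv b y ! t + ?W ! t = h - 1" using a agree by force
  next
    fix t assume a: "t < ?N \<and> ?W ! t \<ge> 1 \<and> Lv b y ! t + ?W ! t = h - 1"
    then have "t < s" using lowy[of t] by simp
    then show "Lv b x ! t + ?W ! t = h - 1" using a agree by force
  qed auto
  have Dx: "card {t. t < ?N \<and> ?W ! t = -1 \<and> Lv b x ! t = h - 1 + 1}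
       + card {t. t < ?N \<and> ?W ! t \<ge> 1 \<and> Lv b x ! t + ?W ! t = h - 1}
       + (if h - 1 = 0 then 1 else 0)
       = card {t. t < ?N \<and> Lv b x ! t = h - 1} + (if e = h - 1 then 1 else 0)"
    using Dformula[OF okx, of b "h - 1"] ex by simp
  have Dy: "card {t. t < ?N \<and> ?W ! t = -1 \<and> Lv b y ! t = h - 1 + 1}
       + card {t. t < ?N \<and> ?W ! t \<ge> 1 \<and> Lv b y ! t + ?W ! t = h - 1}
       + (if h - 1 = 0 then 1 else 0)
       = card {t. t < ?N \<and> Lv b y ! t = h - 1} + (if e = h - 1 then 1 else 0)"
    using Dformula[OF oky, of b "h - 1"] ey len W by simp
  have Deq: "card {t. t < ?N \<and> ?W ! t = -1 \<and> Lv b x ! t = h} =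
             card {t. t < ?N \<and> ?W ! t = -1 \<and> Lv b y ! t = h}"
    using Dx Dy E1 E2 by simp
  have Ax: "{t. t < ?N \<and> ?W ! t = -1 \<and> Lv b x ! t = h} = {t. t < s \<and> ?W ! t = -1 \<and> Lv b x ! t = h}"
  proof (intro Collect_cong iffI conjI)
    fix t assume a: "t < ?N \<and> ?W ! t = -1 \<and> Lv b x ! t = h"
    show "t < s"
    proof (rule ccontr)
      assume "\<not> t < s" then show False using highx[of t] a by simp
    qed
  qed (use s in auto)
  have Ay: "{t. t < s \<and> ?W ! t = -1 \<and> Lv b x ! t = h} = {t. t < s \<and> ?W ! t = -1 \<and> Lv b y ! t = h}"
    using agree by auto
  obtain s' where s': "s \<le> s'" "s' < ?N" "?W ! s' = -1" "Lv b y ! s' = h"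
  proof (cases b)
    case False
    have "Wd b x ! s = -1"
    proof (rule boundary[OF okx s(1)])
      show "Rk x (length x) < Lv b x ! s" using ex e0 h0 sx by simp
      show "\<forall>s'<length x. Lv b x ! s' = Lv b x ! s \<longrightarrow> (if b then s' \<le> s else s \<le> s')"
      proof (intro allI impI)
        fix s'' assume a: "s'' < length x" "Lv b x ! s'' = Lv b x ! s"
        have "s \<le> s''"
        proof (rule ccontr)
          assume "\<not> s \<le> s''" then have "s'' \<le> s - 1" by simp
          moreover have "s - 1 < length x" using s by simp
          ultimately have "Lv b x ! s'' \<le> Lv b x ! (s - 1)" by (rule Lv_mono)
          then show False using a hx sx by simp
        qed
        then show "if b then s'' \<le> s else s \<le> s''" using False by simp
      qed
    qed
    then show ?thesis using that[of s] s sy by simp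
  next
    case True
    let ?M = "{t. t < ?N \<and> Lv b y ! t = h}"
    have fin: "finite ?M" by simp
    have sM: "s \<in> ?M" using s sy by simp
    define m where "m = Max ?M"
    have mM: "m \<in> ?M" unfolding m_def using fin sM by (intro Max_in) auto
    have sm: "s \<le> m" unfolding m_def using fin sM by (intro Max_ge)
    have mx: "\<forall>t\<in>?M. t \<le> m" unfolding m_def using fin by (auto intro: Max_ge)
    have "Wd b y ! m = -1"
    proof (rule boundary[OF oky])
      show "m < length y" using mM len by simp
      show "Rk y (length y) < Lv b y ! m" using ey eb True h0 mM by simp
      show "\<forall>s'<length y. Lv b y ! s' = Lv b y ! m \<longrightarrow> (if b then s' \<le> m else m \<le> s')"
        using mx mM True len by auto
    qed
    then show ?thesis using that[of m] sm mM W by simp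
  qed
  have sub: "{t. t < s \<and> ?W ! t = -1 \<and> Lv b y ! t = h} \<union> {s'} \<subseteq> {t. t < ?N \<and> ?W ! t = -1 \<and> Lv b y ! t = h}"
    using s' s by auto
  have "card ({t. t < s \<and> ?W ! t = -1 \<and> Lv b y ! t = h} \<union> {s'}) = card {t. t < s \<and> ?W ! t = -1 \<and> Lv b y ! t = h} + 1"
    using s' by (subst card_Un_disjoint) auto
  moreover have "card ({t. t < s \<and> ?W ! t = -1 \<and> Lv b y ! t = h} \<union> {s'}) \<le> card {t. t < ?N \<and> ?W ! t = -1 \<and> Lv b y ! t = h}"
    by (rule card_mono[OF _ sub]) simp
  ultimately show False using Deq Ax Ay by simp
qed

lemma parse:
  assumes okx: "pathok x" and oky: "pathok y" and len: "length y = length x"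
    and ex: "Rk x (length x) = e" and ey: "Rk y (length y) = e" and e0: "e \<le> 0" and eb: "b \<longrightarrow> e < 0"
    and W: "Wd b x = Wd b y"
  shows "Lv b x = Lv b y"
proof (rule ccontr)
  assume ne: "Lv b x \<noteq> Lv b y"
  let ?N = "length x"
  have "\<exists>t<?N. Lv b x ! t \<noteq> Lv b y ! t"
    using ne len by (metis len_Lv nth_equalityI)
  then obtain s0 where "s0 < ?N" "Lv b x ! s0 \<noteq> Lv b y ! s0" by blast
  define s where "s = (LEAST t. t < ?N \<and> Lv b x ! t \<noteq> Lv b y ! t)"
  have sP: "s < ?N \<and> Lv b x ! s \<noteq> Lv b y ! s"
    unfolding s_def by (rule LeastI[of _ s0]) (use \<open>s0 < ?N\<close> \<open>Lv b x ! s0 \<noteq> Lv b y ! s0\<close> in simp)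
  have agree: "\<forall>t<s. Lv b x ! t = Lv b y ! t"
  proof (intro allI impI)
    fix t assume "t < s"
    then have "\<not> (t < ?N \<and> Lv b x ! t \<noteq> Lv b y ! t)" unfolding s_def by (rule not_less_Least)
    then show "Lv b x ! t = Lv b y ! t" using \<open>t < s\<close> sP by simp
  qed
  have s0': "0 < s"
  proof (rule ccontr)
    assume "\<not> 0 < s" then have "s = 0" by simp
    then show False using sP Lv_0[OF okx, of b] Lv_0[OF oky, of b] len by simp
  qed
  let ?h = "Lv b x ! (s - 1)"
  have hy: "Lv b y ! (s - 1) = ?h" using agree s0' by simp
  have sx: "?h \<le> Lv b x ! s" "Lv b x ! s \<le> ?h + 1"
    using Lv_mono[of "s - 1" s x b] Lv_contig[OF okx _, of "s - 1" b] ex e0 sP s0' by auto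
  have sy: "?h \<le> Lv b y ! s" "Lv b y ! s \<le> ?h + 1"
    using Lv_mono[of "s - 1" s y b] Lv_contig[OF oky _, of "s - 1" b] ey e0 sP s0' len hy by auto
  show False
  proof (cases "Lv b x ! s = ?h + 1")
    case True
    then have "Lv b y ! s = ?h" using sy sP by auto
    then show False
      using parse_core[OF okx oky len ex ey e0 eb W _ s0' agree refl True] sP by simp
  next
    case False
    then have x1: "Lv b x ! s = ?h" using sx by auto
    then have y1: "Lv b y ! s = ?h + 1" using sy sP by auto
    have agree': "\<forall>t<s. Lv b y ! t = Lv b x ! t" using agree by simp
    show False
      using parse_core[OF oky okx len[symmetric] ey ex e0 eb W[symmetric] _ s0' agree' hy y1 x1] sP len
      by simp
  qed
qed

lemma sweep_inj_int:
  assumes "pathok x" "pathok y" "length y = length x"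
    "Rk x (length x) = e" "Rk y (length y) = e" "e \<le> 0" "b \<longrightarrow> e < 0"
    "Wd b x = Wd b y"
  shows "x = y"
  using recon[OF assms(3)[symmetric] assms(8) parse[OF assms]] .



definition conv :: "rat \<Rightarrow> rat \<Rightarrow> int" where
  "conv c v = (if v = -1 then -1 else \<lfloor>v - c\<rfloor>)"

definition jj :: "rat list \<Rightarrow> nat \<Rightarrow> nat" where
  "jj a i = length (filter (\<lambda>v. 0 < v) (take i a))"

definition entok :: "rat \<Rightarrow> rat list \<Rightarrow> bool" where
  "entok c a \<longleftrightarrow> (\<forall>v\<in>set a. v = -1 \<or> (0 < v \<and> (\<exists>\<kappa>::nat. \<kappa> \<ge> 1 \<and> v = of_nat \<kappa> + c)))"

definition goodp :: "rat \<Rightarrow> rat list \<Rightarrow> bool" where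
  "goodp c a \<longleftrightarrow> entok c a \<and> (\<forall>i\<le>length a. 0 \<le> rank a i) \<and> sum_list a = 0"

lemma entok_take: "entok c a \<Longrightarrow> entok c (take i a)"
  unfolding entok_def by (meson in_set_takeD)

lemma entok_drop: "entok c a \<Longrightarrow> entok c (drop i a)"
  unfolding entok_def by (meson in_set_dropD)

lemma sum_conv:
  "entok c a \<Longrightarrow> sum_list a = of_int (sum_list (map (conv c) a)) + c * of_nat (length (filter (\<lambda>v. 0 < v) a))"
proof (induction a)
  case Nil then show ?case by simp
next
  case (Cons v a)
  then have IH: "sum_list a = of_int (sum_list (map (conv c) a)) + c * of_nat (length (filter (\<lambda>v. 0 < v) a))"
    by (simp add: entok_def)
  have "v = -1 \<or> (0 < v \<and> (\<exists>\<kappa>::nat. \<kappa> \<ge> 1 \<and> v = of_nat \<kappa> + c))" using Cons.prems by (simp add: entok_def)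
  then show ?case
  proof
    assume v: "v = -1"
    then have "conv c v = -1" by (simp add: conv_def)
    then show ?thesis using IH v by simp
  next
    assume "0 < v \<and> (\<exists>\<kappa>::nat. \<kappa> \<ge> 1 \<and> v = of_nat \<kappa> + c)"
    then obtain \<kappa> :: nat where k: "0 < v" "v = of_nat \<kappa> + c" by blast
    then have "v \<noteq> -1" by simp
    then have "conv c v = int \<kappa>" using k by (simp add: conv_def)
    then show ?thesis using IH k by (simp add: algebra_simps)
  qed
qed

lemma rank_conv:
  assumes "entok c a"
  shows "rank a i = of_int (Rk (map (conv c) a) i) + c * of_nat (jj a i)"
  using sum_conv[OF entok_take[OF assms, of i]] by (simp add: rank_def Rk_def jj_def take_map)

lemma conv_vals:
  assumes "entok c a"
  shows "\<forall>v\<in>set (map (conv c) a). v = -1 \<or> v \<ge> 1"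
proof
  fix w assume "w \<in> set (map (conv c) a)"
  then obtain v where v: "v \<in> set a" "w = conv c v" by auto
  then have "v = -1 \<or> (0 < v \<and> (\<exists>\<kappa>::nat. \<kappa> \<ge> 1 \<and> v = of_nat \<kappa> + c))" using assms by (simp add: entok_def)
  then show "w = -1 \<or> w \<ge> 1"
  proof
    assume "v = -1" then show ?thesis using v by (simp add: conv_def)
  next
    assume "0 < v \<and> (\<exists>\<kappa>::nat. \<kappa> \<ge> 1 \<and> v = of_nat \<kappa> + c)"
    then obtain \<kappa> :: nat where k: "0 < v" "\<kappa> \<ge> 1" "v = of_nat \<kappa> + c" by blast
    then show ?thesis using v by (simp add: conv_def)
  qed
qed

definition unconv :: "rat \<Rightarrow> int \<Rightarrow> rat" where
  "unconv c w = (if w = -1 then -1 else of_int w + c)"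

lemma unconv_conv:
  assumes "entok c a"
  shows "map (unconv c) (map (conv c) a) = a"
proof -
  have "unconv c (conv c v) = v" if "v \<in> set a" for v
  proof -
    have "v = -1 \<or> (0 < v \<and> (\<exists>\<kappa>::nat. \<kappa> \<ge> 1 \<and> v = of_nat \<kappa> + c))" using assms that by (simp add: entok_def)
    then show ?thesis
    proof
      assume "v = -1" then show ?thesis by (simp add: conv_def unconv_def)
    next
      assume "0 < v \<and> (\<exists>\<kappa>::nat. \<kappa> \<ge> 1 \<and> v = of_nat \<kappa> + c)"
      then obtain \<kappa> :: nat where k: "0 < v" "\<kappa> \<ge> 1" "v = of_nat \<kappa> + c" by blast
      then show ?thesis by (simp add: conv_def unconv_def)
    qed
  qed
  then show ?thesis by (simp add: map_idI)
qed

lemma conv_inj: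
  assumes "entok c a" "entok c a'" "map (conv c) a = map (conv c) a'"
  shows "a = a'"
  using unconv_conv[OF assms(1)] unconv_conv[OF assms(2)] assms(3) by metis

lemma nopos_sum:
  assumes "entok c a" "filter (\<lambda>v. 0 < v) a = []"
  shows "sum_list a = - of_nat (length a)"
  using assms
proof (induction a)
  case Nil then show ?case by simp
next
  case (Cons v a)
  then have "v = -1" by (auto simp: entok_def)
  then show ?case using Cons by (simp add: entok_def)
qed

lemma split_at:
  assumes "i \<le> i'"
  shows "rank a i' = rank a i + sum_list (take (i' - i) (drop i a))"
    and "jj a i' = jj a i + length (filter (\<lambda>v. 0 < v) (take (i' - i) (drop i a)))"
proof -
  have "take i' a = take i a @ take (i' - i) (drop i a)"
    using assms by (metis le_add_diff_inverse take_add)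
  then show "rank a i' = rank a i + sum_list (take (i' - i) (drop i a))"
    and "jj a i' = jj a i + length (filter (\<lambda>v. 0 < v) (take (i' - i) (drop i a)))"
    by (simp_all add: rank_def jj_def)
qed

lemma jj_mono: "i \<le> i' \<Longrightarrow> jj a i \<le> jj a i'"
  using split_at(2) by fastforce

lemma F3:
  assumes ok: "entok c a" and ii: "i < i'" "i' \<le> length a" and eq: "jj a i = jj a i'"
  shows "rank a i' = rank a i - of_nat (i' - i)"
proof -
  let ?l = "take (i' - i) (drop i a)"
  have "length (filter (\<lambda>v. 0 < v) ?l) = 0" using split_at(2)[of i i' a] ii eq by simp
  then have "filter (\<lambda>v. 0 < v) ?l = []" by simp
  moreover have "entok c ?l" using entok_take[OF entok_drop[OF ok]] .
  ultimately have "sum_list ?l = - of_nat (length ?l)" by (rule nopos_sum[rotated])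
  moreover have "length ?l = i' - i" using ii by simp
  ultimately show ?thesis using split_at(1)[of i i' a] ii by simp
qed

lemma F3': "entok c a \<Longrightarrow> i < i' \<Longrightarrow> i' \<le> length a \<Longrightarrow> jj a i = jj a i' \<Longrightarrow> rank a i' < rank a i"
  using F3[of c a i i'] by simp

lemma jj_end: "jj a (length a) = length (filter (\<lambda>v. 0 < v) a)"
  by (simp add: jj_def)

lemma jj_le: "jj a i \<le> length (filter (\<lambda>v. 0 < v) a)"
  unfolding jj_def by (metis append_take_drop_id filter_append length_append le_add1)

lemma F2:
  assumes g: "goodp c a" and i: "i < length a" and J: "jj a i = length (filter (\<lambda>v. 0 < v) a)"
  shows "rank a i > 0"
proof -
  have ok: "entok c a" using g by (simp add: goodp_def)
  have "rank a (length a) = rank a i - of_nat (length a - i)"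
    using F3[OF ok i order.refl] J jj_end[of a] by simp
  moreover have "rank a (length a) = 0" using g by (simp add: goodp_def rank_def)
  ultimately show ?thesis using i by simp
qed

lemma F1:
  assumes g: "goodp c a" and i: "0 < i" "i \<le> length a"
  shows "jj a i \<ge> 1"
proof -
  have ok: "entok c a" using g by (simp add: goodp_def)
  have a0: "a ! 0 = -1 \<or> 0 < a ! 0" using ok i unfolding entok_def by (metis gr_zeroI less_le_trans nth_mem)
  have "rank a 1 = a ! 0" using i by (cases a) (auto simp: rank_def)
  moreover have "rank a 1 \<ge> 0" using g i by (simp add: goodp_def)
  ultimately have "0 < a ! 0" using a0 by auto
  then have "jj a 1 = 1" using i by (cases a) (auto simp: jj_def)
  then show ?thesis using jj_mono[of 1 i a] i by simp
qed



lemma sweep_order_eq: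
  assumes len: "length x = length a"
    and ord: "\<And>i i'. i < length a \<Longrightarrow> i' < length a \<Longrightarrow> ky b x i < ky b x i' \<Longrightarrow>
                 (rank a i, - int i) < (rank a i', - int i')"
  shows "sweep_order a = ordl b x"
  unfolding sweep_order_def
proof (rule sort_key_inj_key_eq)
  show "mset [0..<length a] = mset (ordl b x)" using len by simp
  show "inj_on (\<lambda>i. (rank a i, - int i)) (set [0..<length a])" by (auto simp: inj_on_def)
  show "sorted (map (\<lambda>i. (rank a i, - int i)) (ordl b x))"
  proof (subst sorted_iff_nth_mono_less, intro allI impI)
    fix s t assume st0: "s < t" "t < length (map (\<lambda>i. (rank a i, - int i)) (ordl b x))"
    then have st: "s < t \<and> t < length (map (\<lambda>i. (rank a i, - int i)) (ordl b x))" by simp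
    then have s: "s < length x" "t < length x" by auto
    have "ky b x (ordl b x ! s) < ky b x (ordl b x ! t)" using ordl_less_iff[OF s, of b] st by simp
    then have "(rank a (ordl b x ! s), - int (ordl b x ! s)) < (rank a (ordl b x ! t), - int (ordl b x ! t))"
      using ord ordl_nth_lt[OF s(1), of b] ordl_nth_lt[OF s(2), of b] len by simp
    then show "map (\<lambda>i. (rank a i, - int i)) (ordl b x) ! s \<le> map (\<lambda>i. (rank a i, - int i)) (ordl b x) ! t"
      using s by (simp only: length_map nth_map ordl_props(3))
  qed
qed

lemma Wd_conv:
  assumes "sweep_order a = ordl b (map (conv c) a)"
  shows "Wd b (map (conv c) a) = map (conv c) (sweep a)"
proof -
  have "\<forall>i\<in>set (ordl b (map (conv c) a)). i < length a" using ordl_props(2)[of b "map (conv c) a"] by auto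
  then show ?thesis using assms unfolding Wd_def sweep_def by simp
qed

lemma inj_from_Wd:
  assumes g: "goodp c a" "goodp c a'"
    and so: "sweep_order a = ordl b (map (conv c) a)" "sweep_order a' = ordl b (map (conv c) a')"
    and sw: "sweep a = sweep a'"
  shows "Wd b (map (conv c) a) = Wd b (map (conv c) a')"
  using Wd_conv[OF so(1)] Wd_conv[OF so(2)] sw by simp

section \<open>Case c = 0\<close>

lemma case0:
  assumes g: "goodp 0 a"
  defines "x \<equiv> map (conv 0) a"
  shows "sweep_order a = ordl False x" "pathok x" "Rk x (length x) = 0"
proof -
  have ok: "entok 0 a" using g by (simp add: goodp_def)
  have r: "rank a i = of_int (Rk x i)" for i using rank_conv[OF ok, of i] unfolding x_def by simp
  show "sweep_order a = ordl False x"
  proof (rule sweep_order_eq)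
    show "length x = length a" by (simp add: x_def)
    fix i i' assume "ky False x i < ky False x i'"
    then show "(rank a i, - int i) < (rank a i', - int i')" by (auto simp: ky_def r)
  qed
  show "pathok x" unfolding pathok_def
    using conv_vals[OF ok] g r by (auto simp: x_def goodp_def)
  have "rank a (length a) = 0" using g by (simp add: goodp_def rank_def)
  then show "Rk x (length x) = 0" using r[of "length a"] by (simp add: x_def)
qed

section \<open>Case c = 1/n\<close>

lemma caseP:
  assumes g: "goodp c a" and n: "n = length (filter (\<lambda>v. 0 < v) a)" "n \<ge> 1" and c: "c = 1 / of_nat n"
  defines "x \<equiv> map (conv c) a"
  shows "sweep_order a = ordl True x" "pathok x" "Rk x (length x) = -1"
proof -
  have ok: "entok c a" using g by (simp add: goodp_def)
  have r: "rank a i = of_int (Rk x i) + of_nat (jj a i) / of_nat n" for i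
    using rank_conv[OF ok, of i] c unfolding x_def by simp
  have np: "(of_nat n :: rat) > 0" using n(2) by simp
  have Jle: "of_nat (jj a i) / of_nat n \<le> (1::rat)" for i
    using jj_le[of a i] n np by (simp add: divide_le_eq_1)
  have Jge: "of_nat (jj a i) / of_nat n \<ge> (0::rat)" for i by simp
  have Rnn: "Rk x i \<ge> 0" if i: "i < length a" for i
  proof (rule ccontr)
    assume "\<not> ?thesis" then have "Rk x i \<le> -1" by simp
    then have "rank a i \<le> 0" using r[of i] Jle[of i] by linarith
    moreover have "rank a i \<ge> 0" using g i by (simp add: goodp_def)
    ultimately have "rank a i = 0" by simp
    then have "of_nat (jj a i) / of_nat n = (1::rat)" "Rk x i = -1"
      using r[of i] Jle[of i] \<open>Rk x i \<le> -1\<close> by linarith+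
    then have "jj a i = n" using np by (simp add: divide_eq_1_iff)
    then have "rank a i > 0" using F2[OF g i] n by simp
    then show False using \<open>rank a i = 0\<close> by simp
  qed
  show "sweep_order a = ordl True x"
  proof (rule sweep_order_eq)
    show "length x = length a" by (simp add: x_def)
    fix i i' assume i: "i < length a" "i' < length a" and k: "ky True x i < ky True x i'"
    have "rank a i < rank a i'"
    proof (cases "Rk x i < Rk x i'")
      case True
      then have "Rk x i + 1 \<le> Rk x i'" by simp
      then have ri: "(of_int (Rk x i) :: rat) + 1 \<le> of_int (Rk x i')"
        by (metis of_int_1 of_int_add of_int_le_iff)
      then have le: "rank a i \<le> rank a i'" using r[of i] r[of i'] Jle[of i] Jge[of i'] by linarith
      show ?thesis
      proof (rule ccontr)
        assume "\<not> ?thesis" then have eq: "rank a i = rank a i'" using le by simp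
        have e1: "of_nat (jj a i') / of_nat n = (0::rat)" and e2: "of_nat (jj a i) / of_nat n = (1::rat)"
           and e3: "of_int (Rk x i) + 1 = (of_int (Rk x i') :: rat)"
          using eq r[of i] r[of i'] Jle[of i] Jge[of i'] ri by linarith+
        have "jj a i' = 0" using e1 np by simp
        then have "i' = 0" using F1[OF g, of i'] i by (metis gr0I less_imp_le not_one_le_zero)
        then have "Rk x i' = 0" by simp
        have "jj a i = n" using e2 np by (simp add: divide_eq_1_iff)
        then have "rank a i > 0" using F2[OF g i(1)] n by simp
        moreover have "rank a i = of_int (Rk x i) + 1" using r[of i] e2 by simp
        ultimately show False using e3 \<open>Rk x i' = 0\<close> by simp
      qed
    next
      case False
      then have eqR: "Rk x i = Rk x i'" and ii: "i < i'" using k by (auto simp: ky_def)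
      have "jj a i \<le> jj a i'" using jj_mono ii by simp
      moreover have "jj a i \<noteq> jj a i'"
      proof
        assume "jj a i = jj a i'"
        then have "rank a i' < rank a i" using F3'[OF ok ii] i by simp
        then show False using r[of i] r[of i'] eqR \<open>jj a i = jj a i'\<close> by simp
      qed
      ultimately have "jj a i < jj a i'" by simp
      then have "of_nat (jj a i) / of_nat n < (of_nat (jj a i') / of_nat n :: rat)"
        using np by (simp add: divide_strict_right_mono)
      then show ?thesis using r[of i] r[of i'] eqR by simp
    qed
    then show "(rank a i, - int i) < (rank a i', - int i')" by simp
  qed
  show "pathok x" unfolding pathok_def
    using conv_vals[OF ok] Rnn by (auto simp: x_def)
  have "rank a (length a) = 0" using g by (simp add: goodp_def rank_def)
  moreover have "jj a (length a) = n" using jj_end n by simp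
  ultimately have "of_int (Rk x (length a)) + 1 = (0::rat)" using r[of "length a"] np by simp
  then have "Rk x (length a) = -1"
    by (metis add.commute add_eq_0_iff eq_neg_iff_add_eq_0 of_int_eq_iff of_int_minus of_int_1)
  then show "Rk x (length x) = -1" by (simp add: x_def)
qed



section \<open>Case c = -1/n\<close>

lemma caseM:
  assumes g: "goodp c a" and n: "n = length (filter (\<lambda>v. 0 < v) a)" "n \<ge> 1" and c: "c = - 1 / of_nat n"
  defines "x \<equiv> map (conv c) a"
  shows "sweep_order a = ordl False x" "pathok (x @ [-1])" "Rk (x @ [-1]) (length (x @ [-1])) = 0"
    "Wd False (x @ [-1]) = hd (Wd False x) # (-1) # tl (Wd False x)"
proof -
  have ok: "entok c a" using g by (simp add: goodp_def)
  have r: "rank a i = of_int (Rk x i) - of_nat (jj a i) / of_nat n" for i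
    using rank_conv[OF ok, of i] c unfolding x_def by simp
  have np: "(of_nat n :: rat) > 0" using n(2) by simp
  have Jle: "of_nat (jj a i) / of_nat n \<le> (1::rat)" for i
    using jj_le[of a i] n np by (simp add: divide_le_eq_1)
  have Jge: "of_nat (jj a i) / of_nat n \<ge> (0::rat)" for i by simp
  have lx: "length x = length a" by (simp add: x_def)
  have Rnn: "Rk x i \<ge> 0" if i: "i \<le> length a" for i
  proof -
    have "rank a i \<ge> 0" using g i by (simp add: goodp_def)
    then have "(of_int (Rk x i) :: rat) \<ge> 0" using r[of i] Jge[of i] by linarith
    then show ?thesis by simp
  qed
  have R1: "Rk x i \<ge> 1" if i: "0 < i" "i \<le> length a" for i
  proof -
    have "rank a i \<ge> 0" using g i by (simp add: goodp_def)
    moreover have "jj a i \<ge> 1" using F1[OF g i] .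
    then have "of_nat (jj a i) / of_nat n > (0::rat)" using np by simp
    ultimately have "(of_int (Rk x i) :: rat) > 0" using r[of i] by linarith
    then show ?thesis by simp
  qed
  have RN: "Rk x (length a) = 1"
  proof -
    have "rank a (length a) = 0" using g by (simp add: goodp_def rank_def)
    moreover have "jj a (length a) = n" using jj_end n by simp
    ultimately have "(of_int (Rk x (length a)) :: rat) = 1" using r[of "length a"] np by simp
    then show ?thesis by simp
  qed
  show so: "sweep_order a = ordl False x"
  proof (rule sweep_order_eq)
    show "length x = length a" by (rule lx)
    fix i i' assume i: "i < length a" "i' < length a" and k: "ky False x i < ky False x i'"
    have "rank a i < rank a i'"
    proof (cases "Rk x i < Rk x i'")
      case True
      then have "Rk x i + 1 \<le> Rk x i'" by simp
      then have ri: "(of_int (Rk x i) :: rat) + 1 \<le> of_int (Rk x i')"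
        by (metis of_int_1 of_int_add of_int_le_iff)
      then have le: "rank a i \<le> rank a i'" using r[of i] r[of i'] Jle[of i'] Jge[of i] by linarith
      show ?thesis
      proof (rule ccontr)
        assume "\<not> ?thesis" then have eq: "rank a i = rank a i'" using le by simp
        have e1: "of_nat (jj a i) / of_nat n = (0::rat)" and e2: "of_nat (jj a i') / of_nat n = (1::rat)"
           and e3: "of_int (Rk x i) + 1 = (of_int (Rk x i') :: rat)"
          using eq r[of i] r[of i'] Jle[of i'] Jge[of i] ri by linarith+
        have "jj a i = 0" using e1 np by simp
        then have "i = 0" using F1[OF g, of i] i by (metis gr0I less_imp_le not_one_le_zero)
        then have "Rk x i = 0" by simp
        have "jj a i' = n" using e2 np by (simp add: divide_eq_1_iff)
        then have "rank a i' > 0" using F2[OF g i(2)] n by simp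
        moreover have "rank a i' = of_int (Rk x i') - 1" using r[of i'] e2 by simp
        ultimately show False using e3 \<open>Rk x i = 0\<close> by simp
      qed
    next
      case False
      then have eqR: "Rk x i = Rk x i'" and ii: "i' < i" using k by (auto simp: ky_def)
      have "jj a i' \<le> jj a i" using jj_mono ii by simp
      moreover have "jj a i' \<noteq> jj a i"
      proof
        assume "jj a i' = jj a i"
        then have "rank a i < rank a i'" using F3'[OF ok ii] i by simp
        then show False using r[of i] r[of i'] eqR \<open>jj a i' = jj a i\<close> by simp
      qed
      ultimately have "jj a i' < jj a i" by simp
      then have "of_nat (jj a i') / of_nat n < (of_nat (jj a i) / of_nat n :: rat)"
        using np by (simp add: divide_strict_right_mono)
      then show ?thesis using r[of i] r[of i'] eqR by simp
    qed
    then show "(rank a i, - int i) < (rank a i', - int i')" by simp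
  qed
  let ?a0 = "x @ [-1]"
  have Ra0: "Rk ?a0 i = Rk x i" if "i \<le> length x" for i
    using that by (simp add: Rk_def)
  have Ra0N: "Rk ?a0 (Suc (length x)) = 0"
    using RN lx by (simp add: Rk_def)
  show "pathok ?a0"
    unfolding pathok_def
  proof (intro conjI ballI allI impI)
    fix v assume "v \<in> set ?a0" then show "v = -1 \<or> v \<ge> 1" using conv_vals[OF ok] by (auto simp: x_def)
  next
    fix i assume "i < length ?a0"
    then have "i \<le> length x" by simp
    then show "Rk ?a0 i \<ge> 0" using Ra0 Rnn lx by simp
  qed
  show "Rk ?a0 (length ?a0) = 0" using Ra0N by simp
  let ?p = "ordl False x"
  let ?N = "length x"
  have Npos: "0 < ?N"
  proof -
    have "length (filter (\<lambda>v. 0 < v) a) \<ge> 1" using n by simp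
    then have "a \<noteq> []" by auto
    then show ?thesis using lx by simp
  qed
  have p0: "?p ! 0 = 0"
  proof (rule ccontr)
    assume ne: "?p ! 0 \<noteq> 0"
    obtain t0 where t0: "t0 < ?N" "?p ! t0 = 0" using ordl_index[OF Npos] by blast
    have "t0 \<noteq> 0" using t0 ne by (metis)
    then have "0 < t0" by simp
    then have "ky False x (?p ! 0) < ky False x (?p ! t0)" using ordl_less_iff[OF Npos t0(1), of False] by simp
    moreover have "Rk x (?p ! 0) \<ge> 1" using R1[of "?p ! 0"] ne ordl_nth_lt[OF Npos, of False] lx by simp
    ultimately show False using t0 by (simp add: ky_def)
  qed
  have pne: "?p \<noteq> []" using Npos ordl_props(3)[of False x] by (metis length_0_conv less_irrefl)
  obtain rest where pr: "?p = 0 # rest" using p0 pne by (cases ?p) auto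
  have pc: "?p = 0 # tl ?p" using pr by simp
  have tlset: "set (tl ?p) = {1..<?N}"
  proof -
    have s1: "set (0 # rest) = {..<?N}" using ordl_props(2)[of False x] unfolding pr .
    have s2: "distinct (0 # rest)" using ordl_props(1)[of False x] unfolding pr .
    have "insert 0 (set rest) = {..<?N}" using s1 by (simp only: list.set)
    moreover have "0 \<notin> set rest" using s2 by (simp only: distinct.simps) blast
    ultimately have "set rest = {..<?N} - {0}" by blast
    moreover have "{..<?N} - {0} = {1..<?N}" by auto
    ultimately have "set rest = {1..<?N}" by simp
    then show ?thesis using pr by simp
  qed
  have ord0: "ordl False ?a0 = 0 # ?N # tl ?p"
  proof (rule sort_key_inj_key_eq)
    have "mset (0 # ?N # tl ?p) = add_mset ?N (mset (0 # tl ?p))" by simp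
    also have "\<dots> = add_mset ?N (mset ?p)" using pr by simp
    also have "\<dots> = add_mset ?N (mset [0..<?N])" by simp
    also have "\<dots> = mset [0..<length ?a0]" by simp
    finally show "mset [0..<length ?a0] = mset (0 # ?N # tl ?p)" by simp
    show "inj_on (ky False ?a0) (set [0..<length ?a0])" by (rule ky_inj)
    have kyeq: "ky False ?a0 q = ky False x q" if "q < ?N" for q
      using Ra0[of q] that by (simp add: ky_def)
    have st: "sorted (map (ky False x) ?p)" using sk_basic(4)[of "ky False x" ?N] by simp
    then have st1: "sorted (map (ky False x) (tl ?p))" by (metis map_tl sorted_tl)
    have meq: "map (ky False ?a0) (tl ?p) = map (ky False x) (tl ?p)"
      using kyeq tlset by (intro map_cong) auto
    have st2: "sorted (map (ky False ?a0) (tl ?p))" using st1 meq by (simp only:)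
    have kN: "ky False ?a0 ?N = (1, - int ?N)" using Ra0[of ?N] RN lx by (simp add: ky_def)
    have k0: "ky False ?a0 0 = (0, 0)" by (simp add: ky_def)
    have kq: "ky False ?a0 ?N \<le> ky False ?a0 q" if "q \<in> set (tl ?p)" for q
    proof -
      have q: "1 \<le> q" "q < ?N" using that tlset by auto
      then have "Rk x q \<ge> 1" using R1[of q] lx by simp
      then show ?thesis using kN kyeq[OF q(2)] q by (auto simp: ky_def)
    qed
    have kq0: "ky False ?a0 0 \<le> ky False ?a0 q" if "q \<in> set (tl ?p)" for q
    proof -
      have q: "1 \<le> q" "q < ?N" using that tlset by auto
      then have "Rk x q \<ge> 1" using R1[of q] lx by simp
      then show ?thesis using k0 kyeq[OF q(2)] by (auto simp: ky_def)
    qed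
    show "sorted (map (ky False ?a0) (0 # ?N # tl ?p))"
      using st2 kq kq0 k0 kN by auto
  qed
  have "Wd False ?a0 = map (nth ?a0) (0 # ?N # tl ?p)" by (simp only: Wd_def ord0)
  also have "\<dots> = x ! 0 # (-1) # map (nth x) (tl ?p)"
  proof -
    have "map (nth ?a0) (tl ?p) = map (nth x) (tl ?p)"
      using tlset by (intro map_cong) (auto simp: nth_append)
    then show ?thesis using Npos by (simp add: nth_append)
  qed
  also have "\<dots> = hd (Wd False x) # (-1) # tl (Wd False x)"
  proof -
    have "Wd False x = map (nth x) (0 # tl ?p)" unfolding Wd_def using pr by simp
    then show ?thesis by simp
  qed
  finally show "Wd False (x @ [-1]) = hd (Wd False x) # (-1) # tl (Wd False x)" .
qed



lemma rank_Suc: "p < length a \<Longrightarrow> rank a (Suc p) = rank a p + a ! p"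
  by (simp add: rank_def take_Suc_conv_app_nth)

lemma nonneg_sum:
  fixes a :: "rat list"
  assumes ent: "\<forall>v\<in>set a. v = -1 \<or> 0 < v" and rk: "\<forall>i\<le>length a. 0 \<le> rank a i"
    and s0: "sum_list a = 0" and x0: "x0 \<ge> 0"
    and S1: "{p. p < length a \<and> rank a p < x0} \<subseteq> S" and S2: "S \<subseteq> {p. p < length a \<and> rank a p \<le> x0}"
  shows "0 \<le> (\<Sum>p\<in>S. a ! p)"
proof -
  let ?N = "length a"
  define f where "f y = min y x0" for y :: rat
  define g where "g p = f (rank a (Suc p)) - f (rank a p)" for p
  define A where "A = {p. p < ?N \<and> rank a p < x0}"
  define B where "B = {..<?N} - A"
  define E where "E = {p. p < ?N \<and> rank a p = x0 \<and> a ! p = -1}"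
  have finS: "finite S" using S2 by (rule finite_subset) simp
  have rN: "rank a ?N = 0" using s0 by (simp add: rank_def)
  have tel: "(\<Sum>p<?N. g p) = 0"
    unfolding g_def using sum_lessThan_telescope[of "\<lambda>i. f (rank a i)" ?N] rN x0 by (simp add: f_def rank_def)
  have g1: "g p \<le> a ! p" if "p \<in> A" for p
    using that rank_Suc[of p a] by (auto simp: g_def f_def A_def)
  have g2: "g p \<le> 0" if "p \<in> B" for p
    using that by (auto simp: g_def f_def A_def B_def)
  have g3: "g p = -1" if "p \<in> E" for p
    using that rank_Suc[of p a] by (auto simp: g_def f_def E_def)
  have EB: "E \<subseteq> B" by (auto simp: E_def B_def A_def)
  have AS: "A \<subseteq> S" using S1 by (simp add: A_def)
  have split1: "(\<Sum>p\<in>S. a ! p) = (\<Sum>p\<in>A. a ! p) + (\<Sum>p\<in>S - A. a ! p)"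
    using finS AS by (metis add.commute sum.subset_diff)
  have h1: "(\<Sum>p\<in>S - A. a ! p) \<ge> (\<Sum>p\<in>S - A. (if p \<in> E then -1 else 0))"
  proof (rule sum_mono)
    fix p assume p: "p \<in> S - A"
    then have pN: "p < ?N" "rank a p = x0" using S2 by (auto simp: A_def)
    have "a ! p = -1 \<or> 0 < a ! p" using ent pN(1) by auto
    then show "(if p \<in> E then -1 else 0) \<le> a ! p" using pN by (auto simp: E_def)
  qed
  have "(\<Sum>p\<in>S - A. (if p \<in> E then -1 else (0::rat))) = - of_nat (card ((S - A) \<inter> E))"
    using finS by (simp add: sum.If_cases)
  moreover have "card ((S - A) \<inter> E) \<le> card E" by (rule card_mono) (auto simp: E_def)
  ultimately have h2: "(\<Sum>p\<in>S - A. a ! p) \<ge> - of_nat (card E)" using h1 by simp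
  have AN: "A \<subseteq> {..<?N}" by (auto simp: A_def)
  have "(\<Sum>p<?N. g p) = (\<Sum>p\<in>B. g p) + (\<Sum>p\<in>A. g p)"
    unfolding B_def by (rule sum.subset_diff[OF AN finite_lessThan])
  then have h3: "(\<Sum>p\<in>A. g p) = - (\<Sum>p\<in>B. g p)" using tel by simp
  have "(\<Sum>p\<in>B. g p) = (\<Sum>p\<in>E. g p) + (\<Sum>p\<in>B - E. g p)"
    using EB by (metis add.commute finite_Diff finite_lessThan sum.subset_diff B_def)
  moreover have "(\<Sum>p\<in>B - E. g p) \<le> 0" using g2 by (intro sum_nonpos) auto
  moreover have "(\<Sum>p\<in>E. g p) = - of_nat (card E)" using g3 by simp
  ultimately have h4: "(\<Sum>p\<in>B. g p) \<le> - of_nat (card E)" by simp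
  have "(\<Sum>p\<in>A. a ! p) \<ge> (\<Sum>p\<in>A. g p)" using g1 by (intro sum_mono) auto
  then have "(\<Sum>p\<in>A. a ! p) \<ge> of_nat (card E)" using h3 h4 by simp
  then show ?thesis using split1 h2 by simp
qed

lemma sk_take_set:
  fixes f :: "nat \<Rightarrow> 'b::linorder"
  assumes inj: "inj_on f {..<N}" and t: "t < N"
  shows "set (take t (sort_key f [0..<N])) = {p. p < N \<and> f p < f (sort_key f [0..<N] ! t)}"
proof -
  let ?p = "sort_key f [0..<N]"
  have len: "length ?p = N" by simp
  show ?thesis
  proof (intro set_eqI iffI)
    fix q assume "q \<in> set (take t ?p)"
    then obtain s where s: "s < t" "?p ! s = q" using t len by (auto simp: in_set_conv_nth)
    then have "q < N" using sk_basic(2)[of f N] len t by (metis lessThan_iff nth_mem order.strict_trans)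
    moreover have "f q < f (?p ! t)" using sk_strict[OF inj s(1) t] s by simp
    ultimately show "q \<in> {p. p < N \<and> f p < f (?p ! t)}" by simp
  next
    fix q assume q: "q \<in> {p. p < N \<and> f p < f (?p ! t)}"
    obtain s where s: "s < N" "?p ! s = q" using q sk_basic(2)[of f N] len by (metis in_set_conv_nth lessThan_iff mem_Collect_eq)
    have "s < t" using sk_less_iff[OF inj s(1) t] q s by simp
    then show "q \<in> set (take t ?p)" using s t len by (auto simp: in_set_conv_nth intro!: exI[of _ s])
  qed
qed

lemma sweep_mset: "mset (sweep a) = mset a"
proof -
  have "mset (sweep a) = image_mset (nth a) (mset (sweep_order a))" by (simp add: sweep_def)
  also have "\<dots> = image_mset (nth a) (mset [0..<length a])" by (simp add: sweep_order_def)
  also have "\<dots> = mset (map (nth a) [0..<length a])" by simp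
  also have "map (nth a) [0..<length a] = a" by (rule map_nth)
  finally show ?thesis .
qed

lemma sweep_rank_nonneg:
  fixes a :: "rat list"
  assumes ent: "\<forall>v\<in>set a. v = -1 \<or> 0 < v" and rk: "\<forall>i\<le>length a. 0 \<le> rank a i"
    and s0: "sum_list a = 0" and i: "i \<le> length (sweep a)"
  shows "0 \<le> rank (sweep a) i"
proof -
  let ?N = "length a"
  let ?f = "\<lambda>i. (rank a i, - int i)"
  let ?p = "sweep_order a"
  have lsw: "length (sweep a) = ?N" by (simp add: sweep_def sweep_order_def)
  have inj: "inj_on ?f {..<?N}" by (auto simp: inj_on_def)
  have dp: "distinct ?p" by (simp add: sweep_order_def)
  have sp: "set ?p \<subseteq> {..<?N}" by (auto simp: sweep_order_def)
  show ?thesis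
  proof (cases "i < ?N")
    case False
    then have "i = ?N" using i lsw by simp
    then have "rank (sweep a) i = sum_list (sweep a)" using lsw by (simp add: rank_def)
    also have "\<dots> = sum_list a" by (metis sum_mset_sum_list sweep_mset)
    finally show ?thesis using s0 by simp
  next
    case True
    have "rank (sweep a) i = sum_list (map (nth a) (take i ?p))"
      by (simp add: rank_def sweep_def take_map)
    also have "\<dots> = (\<Sum>p\<in>set (take i ?p). a ! p)"
      using dp by (simp add: sum_list_distinct_conv_sum_set)
    also have "set (take i ?p) = {p. p < ?N \<and> ?f p < ?f (?p ! i)}"
      unfolding sweep_order_def by (rule sk_take_set[OF inj True])
    finally have eq: "rank (sweep a) i = (\<Sum>p\<in>{p. p < ?N \<and> ?f p < ?f (?p ! i)}. a ! p)" .
    have qN: "?p ! i < ?N" using sp True by (metis lessThan_iff nth_mem length_sort length_upt minus_nat.diff_0 subsetD sweep_order_def)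
    show ?thesis unfolding eq
    proof (rule nonneg_sum[OF ent rk s0])
      show "0 \<le> rank a (?p ! i)" using rk qN by simp
      show "{p. p < ?N \<and> rank a p < rank a (?p ! i)} \<subseteq> {p. p < ?N \<and> ?f p < ?f (?p ! i)}" by auto
      show "{p. p < ?N \<and> ?f p < ?f (?p ! i)} \<subseteq> {p. p < ?N \<and> rank a p \<le> rank a (?p ! i)}" by auto
    qed
  qed
qed



lemma sum_list_filter_split:
  "sum_list (xs :: rat list) = sum_list (filter P xs) + sum_list (filter (\<lambda>x. \<not> P x) xs)"
  by (induction xs) auto

lemma sum_shiftv: "sum_list (shiftv c k) = of_nat (sum_list k) + c * of_nat (length k)"
  by (induction k) (auto simp: shiftv_def algebra_simps)

lemma all_neg1_sum: "\<forall>v\<in>set xs. v = (-1::rat) \<Longrightarrow> sum_list xs = - of_nat (length xs)"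
  by (induction xs) auto

lemma Dset_props:
  assumes a: "a \<in> Dset (shiftv c k')" and pos: "\<forall>x\<in>set k'. 0 < x"
  shows "goodp c a" "length (filter (\<lambda>v. 0 < v) a) = length k'"
    "of_nat (length a) = of_nat (length k') + of_nat (sum_list k') + c * of_nat (length k')"
proof -
  obtain m :: nat where m: "sum_list (shiftv c k') = of_nat m" "length a = length (shiftv c k') + m"
    "filter (\<lambda>x. 0 < x) a = shiftv c k'" "\<forall>x\<in>set a. 0 < x \<or> x = -1" "\<forall>i\<le>length a. 0 \<le> rank a i"
    using a unfolding Dset_def by blast
  have lu: "length (shiftv c k') = length k'" by (simp add: shiftv_def)
  show lf: "length (filter (\<lambda>v. 0 < v) a) = length k'" using m(3) lu by simp
  have ent: "entok c a" unfolding entok_def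
  proof
    fix v assume v: "v \<in> set a"
    show "v = -1 \<or> (0 < v \<and> (\<exists>\<kappa>::nat. \<kappa> \<ge> 1 \<and> v = of_nat \<kappa> + c))"
    proof (cases "0 < v")
      case True
      then have "v \<in> set (filter (\<lambda>x. 0 < x) a)" using v by simp
      then have "v \<in> set (shiftv c k')" using m(3) by simp
      then obtain \<kappa> where "\<kappa> \<in> set k'" "v = of_nat \<kappa> + c" by (auto simp: shiftv_def)
      then show ?thesis using True pos by (intro disjI2) (auto intro!: exI[of _ \<kappa>])
    next
      case False then show ?thesis using m(4) v by auto
    qed
  qed
  have "length (filter (\<lambda>x. \<not> 0 < x) a) = m"
    using sum_length_filter_compl[of "\<lambda>x. 0 < x" a] m(2) lf lu by simp
  moreover have "\<forall>v\<in>set (filter (\<lambda>x. \<not> 0 < x) a). v = -1" using m(4) by auto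
  ultimately have "sum_list (filter (\<lambda>x. \<not> 0 < x) a) = - of_nat m" using all_neg1_sum by metis
  then have s0: "sum_list a = 0" using sum_list_filter_split[of a "\<lambda>x. 0 < x"] m(1,3) by simp
  show "goodp c a" unfolding goodp_def using ent s0 m(5) by simp
  show "of_nat (length a) = of_nat (length k') + of_nat (sum_list k') + c * of_nat (length k')"
    using m(1,2) lu sum_shiftv[of c k'] by simp
qed

lemma DK_props:
  assumes a: "a \<in> DK c k" and pos: "\<forall>x\<in>set k. 0 < x"
  shows "goodp c a" "length (filter (\<lambda>v. 0 < v) a) = length k"
    "of_nat (length a) = of_nat (length k) + of_nat (sum_list k) + c * of_nat (length k)"
proof -
  obtain k' where k': "mset k' = mset k" "a \<in> Dset (shiftv c k')" using a unfolding DK_def by blast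
  have pos': "\<forall>x\<in>set k'. 0 < x" using pos k'(1) by (metis mset_eq_setD)
  have "length k' = length k" using k'(1) by (metis size_mset)
  moreover have "sum_list k' = sum_list k" using k'(1) by (metis sum_mset_sum_list)
  ultimately show "goodp c a" "length (filter (\<lambda>v. 0 < v) a) = length k"
    "of_nat (length a) = of_nat (length k) + of_nat (sum_list k) + c * of_nat (length k)"
    using Dset_props[OF k'(2) pos'] by auto
qed

lemma DK_len:
  assumes "a \<in> DK c k" "a' \<in> DK c k" "\<forall>x\<in>set k. 0 < x"
  shows "length a' = length a"
  using DK_props(3)[OF assms(1,3)] DK_props(3)[OF assms(2,3)] by simp

lemma sweep_into:
  assumes a: "a \<in> DK c k" and pos: "\<forall>x\<in>set k. 0 < x"
  shows "sweep a \<in> DK c k"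
proof -
  obtain k' where k': "mset k' = mset k" "a \<in> Dset (shiftv c k')" using a unfolding DK_def by blast
  obtain m :: nat where m: "sum_list (shiftv c k') = of_nat m" "length a = length (shiftv c k') + m"
    "filter (\<lambda>x. 0 < x) a = shiftv c k'" "\<forall>x\<in>set a. 0 < x \<or> x = -1" "\<forall>i\<le>length a. 0 \<le> rank a i"
    using k'(2) unfolding Dset_def by blast
  have g: "goodp c a" using DK_props(1)[OF a pos] .
  let ?u = "shiftv c k'"
  let ?s = "sweep a"
  let ?u2 = "filter (\<lambda>x. 0 < x) ?s"
  define gg where "gg v = nat \<lfloor>v - c\<rfloor>" for v
  define k2 where "k2 = map gg ?u2"
  have ms: "mset ?s = mset a" by (rule sweep_mset)
  have mu: "mset ?u2 = mset ?u" using ms m(3) by (metis mset_filter)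
  have setu: "set ?u2 = set ?u" using mu by (metis mset_eq_setD)
  have sh: "shiftv c k2 = ?u2"
  proof -
    have "of_nat (gg v) + c = v" if "v \<in> set ?u2" for v
    proof -
      have "v \<in> set ?u" using that setu by blast
      then obtain \<kappa> where "v = of_nat \<kappa> + c" by (auto simp: shiftv_def)
      then show ?thesis by (simp add: gg_def)
    qed
    then have "map (\<lambda>v. of_nat (gg v) + c) ?u2 = ?u2" by (intro map_idI) blast
    then show ?thesis by (simp add: shiftv_def k2_def comp_def)
  qed
  have mk2: "mset k2 = mset k"
  proof -
    have "mset k2 = image_mset gg (mset ?u)" using mu by (simp add: k2_def)
    also have "\<dots> = image_mset (gg \<circ> (\<lambda>x. of_nat x + c)) (mset k')" by (simp add: shiftv_def image_mset.compositionality)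
    also have "gg \<circ> (\<lambda>x. of_nat x + c) = id" by (auto simp: gg_def)
    finally show ?thesis using k'(1) by simp
  qed
  have lens: "length ?s = length a" using ms by (metis size_mset)
  have s0: "sum_list a = 0" using g by (simp add: goodp_def)
  have ent: "\<forall>v\<in>set a. v = -1 \<or> 0 < v" using m(4) by auto
  have "?s \<in> Dset (shiftv c k2)"
    unfolding Dset_def
  proof (intro CollectI exI[of _ m] conjI)
    show "sum_list (shiftv c k2) = of_nat m" using sh mu m(1) by (metis sum_mset_sum_list)
    show "length ?s = length (shiftv c k2) + m" using sh lens m(2) mu by (metis size_mset)
    show "filter (\<lambda>x. 0 < x) ?s = shiftv c k2" using sh by simp
    show "\<forall>x\<in>set ?s. 0 < x \<or> x = -1" using ms m(4) by (metis mset_eq_setD)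
    show "\<forall>i\<le>length ?s. 0 \<le> rank ?s i"
      using sweep_rank_nonneg[OF ent m(5) s0] by blast
  qed
  then show ?thesis unfolding DK_def using mk2 by blast
qed

lemma DK_finite:
  assumes pos: "\<forall>x\<in>set k. 0 < x"
  shows "finite (DK c k)"
proof -
  let ?P = "{k'. mset k' = mset k}"
  have fP: "finite ?P"
  proof (rule finite_subset)
    show "?P \<subseteq> {xs. set xs \<subseteq> set k \<and> length xs = length k}"
      by (auto, metis mset_eq_setD, metis size_mset)
    show "finite {xs. set xs \<subseteq> set k \<and> length xs = length k}" by (rule finite_lists_length_eq) simp
  qed
  have fD: "finite (Dset u)" for u
  proof (rule finite_subset)
    show "Dset u \<subseteq> {xs. set xs \<subseteq> insert (-1) (set u) \<and> length xs = length u + nat \<lfloor>sum_list u\<rfloor>}"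
    proof
      fix a assume "a \<in> Dset u"
      then obtain m :: nat where m: "sum_list u = of_nat m" "length a = length u + m"
        "filter (\<lambda>x. 0 < x) a = u" "\<forall>x\<in>set a. 0 < x \<or> x = -1"
        unfolding Dset_def by blast
      have "set a \<subseteq> insert (-1) (set u)"
      proof
        fix v assume v: "v \<in> set a"
        show "v \<in> insert (-1) (set u)"
        proof (cases "0 < v")
          case True
          then have "v \<in> set (filter (\<lambda>x. 0 < x) a)" using v by simp
          then show ?thesis using m(3) by simp
        next
          case False then show ?thesis using v m(4) by auto
        qed
      qed
      moreover have "nat \<lfloor>sum_list u\<rfloor> = m" using m(1) by simp
      ultimately show "a \<in> {xs. set xs \<subseteq> insert (-1) (set u) \<and> length xs = length u + nat \<lfloor>sum_list u\<rfloor>}"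
        using m(2) by simp
    qed
    show "finite {xs. set xs \<subseteq> insert (-1) (set u) \<and> length xs = length u + nat \<lfloor>sum_list u\<rfloor>}"
      by (rule finite_lists_length_eq) simp
  qed
  show ?thesis unfolding DK_def using fP fD by blast
qed

lemma bij_from_inj:
  assumes pos: "\<forall>x\<in>set k. 0 < x"
    and inj: "\<And>a a'. a \<in> DK c k \<Longrightarrow> a' \<in> DK c k \<Longrightarrow> sweep a = sweep a' \<Longrightarrow> a = a'"
  shows "bij_betw sweep (DK c k) (DK c k)"
proof -
  have i: "inj_on sweep (DK c k)" using inj by (auto simp: inj_on_def)
  have s: "sweep ` DK c k \<subseteq> DK c k" using sweep_into[OF _ pos] by auto
  show ?thesis unfolding bij_betw_def using i endo_inj_surj[OF DK_finite[OF pos] s i] by simp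
qed



lemma goodp_entok: "goodp c a \<Longrightarrow> entok c a" by (simp add: goodp_def)

lemma inj0:
  assumes pos: "\<forall>x\<in>set k. 0 < x" and a: "a \<in> DK 0 k" and a': "a' \<in> DK 0 k" and sw: "sweep a = sweep a'"
  shows "a = a'"
proof -
  have g: "goodp 0 a" and g': "goodp 0 a'" using DK_props(1) a a' pos by blast+
  have len: "length a' = length a" using DK_len[OF a a' pos] .
  note c = case0[OF g] and c' = case0[OF g']
  have W: "Wd False (map (conv 0) a) = Wd False (map (conv 0) a')"
    using inj_from_Wd[OF g g' c(1) c'(1) sw] .
  have "map (conv 0) a = map (conv 0) a'"
    by (rule sweep_inj_int[OF c(2) c'(2) _ c(3) c'(3) _ _ W]) (use len in simp_all)
  then show ?thesis using conv_inj[OF goodp_entok[OF g] goodp_entok[OF g']] by simp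
qed

lemma injP:
  assumes pos: "\<forall>x\<in>set k. 0 < x" and n: "length k \<ge> 1"
    and a: "a \<in> DK (1 / of_nat (length k)) k" and a': "a' \<in> DK (1 / of_nat (length k)) k"
    and sw: "sweep a = sweep a'"
  shows "a = a'"
proof -
  let ?c = "1 / of_nat (length k) :: rat"
  have g: "goodp ?c a" and g': "goodp ?c a'" using DK_props(1) a a' pos by blast+
  have nf: "length k = length (filter (\<lambda>v. 0 < v) a)" "length k = length (filter (\<lambda>v. 0 < v) a')"
    using DK_props(2) a a' pos by metis+
  have len: "length a' = length a" using DK_len[OF a a' pos] .
  note c = caseP[OF g nf(1) n refl] and c' = caseP[OF g' nf(2) n refl]
  have W: "Wd True (map (conv ?c) a) = Wd True (map (conv ?c) a')"
    using inj_from_Wd[OF g g' c(1) c'(1) sw] .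
  have "map (conv ?c) a = map (conv ?c) a'"
    by (rule sweep_inj_int[OF c(2) c'(2) _ c(3) c'(3) _ _ W]) (use len in simp_all)
  then show ?thesis using conv_inj[OF goodp_entok[OF g] goodp_entok[OF g']] by simp
qed

lemma injM:
  assumes pos: "\<forall>x\<in>set k. 0 < x" and n: "length k \<ge> 1"
    and a: "a \<in> DK (- 1 / of_nat (length k)) k" and a': "a' \<in> DK (- 1 / of_nat (length k)) k"
    and sw: "sweep a = sweep a'"
  shows "a = a'"
proof -
  let ?c = "- 1 / of_nat (length k) :: rat"
  have g: "goodp ?c a" and g': "goodp ?c a'" using DK_props(1) a a' pos by blast+
  have nf: "length k = length (filter (\<lambda>v. 0 < v) a)" "length k = length (filter (\<lambda>v. 0 < v) a')"
    using DK_props(2) a a' pos by metis+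
  have len: "length a' = length a" using DK_len[OF a a' pos] .
  note c = caseM[OF g nf(1) n refl] and c' = caseM[OF g' nf(2) n refl]
  have W: "Wd False (map (conv ?c) a) = Wd False (map (conv ?c) a')"
    using inj_from_Wd[OF g g' c(1) c'(1) sw] .
  then have W0: "Wd False (map (conv ?c) a @ [-1]) = Wd False (map (conv ?c) a' @ [-1])"
    using c(4) c'(4) by simp
  have "map (conv ?c) a @ [-1] = map (conv ?c) a' @ [-1]"
    by (rule sweep_inj_int[OF c(2) c'(2) _ c(3) c'(3) _ _ W0]) (use len in simp_all)
  then have "map (conv ?c) a = map (conv ?c) a'" by simp
  then show ?thesis using conv_inj[OF goodp_entok[OF g] goodp_entok[OF g']] by simp
qed

theorem mainTheorem1:
  fixes k :: "nat list"
  assumes "length k \<ge> 1"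
    and "\<forall>x\<in>set k. 0 < x"
  shows "bij_betw sweep (DK (1 / of_nat (length k)) k) (DK (1 / of_nat (length k)) k)
       \<and> bij_betw sweep (DK (- 1 / of_nat (length k)) k) (DK (- 1 / of_nat (length k)) k)
       \<and> bij_betw sweep (DK 0 k) (DK 0 k)"
  using bij_from_inj[OF assms(2) injP[OF assms(2) assms(1)]]
    bij_from_inj[OF assms(2) injM[OF assms(2) assms(1)]]
    bij_from_inj[OF assms(2) inj0[OF assms(2)]]
  by blast

end
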